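(* Let $\Sigma$ be a flag complex on $[n]$ and let $\ell$ be a positive integer. Let $\Delta$ and $\Delta'$ be the simplicial complexes (collections of subsets of $[n]$ closed under taking subsets) defined by $I_\Delta=I(\overline{\mathrm{skel}_\Sigma(\ell)})$ and $I_{\Delta'}=I(\overline{\mathrm{skel}_\Sigma(1)})$. If $I_{\Delta'}$ has linear quotients, then so does $I_\Delta$.
   Context: $S=K[x_1,\ldots,x_n]$ over a field $K$, $x_F=\prod_{i\in F}x_i$. For a simplicial complex $\Gamma$, $I_\Gamma$ (Stanley–Reisner ideal) is generated by all $x_F$ with $F\notin\Gamma$, and $I(\Gamma)$ (facet ideal) by the $x_F$ with $F$ a facet of $\Gamma$. $\Sigma$ is flag if all minimal nonfaces have two elements (the simplex counts as flag). For $k\geq1$, $\overline{\mathrm{skel}_\Sigma(k)}$ is the complex whose facets are the $(k+1)$-subsets of $[n]$ not in $\Sigma$. A monomial ideal has linear quotients if its minimal monomial generators can be ordered $f_1,\ldots,f_m$ so that for each $i>1$ the colon ideal $(f_1,\ldots,f_{i-1}):f_i$ is generated by variables. *)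

theory Defs
  imports Main "HOL-Library.Multiset"
begin

text \<open>Monomials in K[x_1,...,x_n] are modelled as multisets of variable indices
  (exponent vectors); product is +, divisibility is subset_mset.
  A monomial ideal is represented by the set of monomials it contains
  (which determines it); the field K plays no role.\<close>

type_synonym monomial = "nat multiset"

definition xF :: "nat set \<Rightarrow> monomial" where
  "xF F = mset_set F"

definition var :: "nat \<Rightarrow> monomial" where
  "var i = {#i#}"

definition mon_ideal :: "monomial set \<Rightarrow> monomial set" where
  "mon_ideal G = {m. \<exists>g\<in>G. g \<subseteq># m}"

definition colon :: "monomial set \<Rightarrow> monomial \<Rightarrow> monomial set" where
  "colon I f = {m. m + f \<in> I}"

definition generated_by_variables :: "monomial set \<Rightarrow> bool" where
  "generated_by_variables I \<longleftrightarrow> (\<exists>V. I = mon_ideal (var ` V))"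

definition min_gens :: "monomial set \<Rightarrow> monomial set" where
  "min_gens I = {m \<in> I. \<forall>m'\<in>I. m' \<subseteq># m \<longrightarrow> m' = m}"

definition linear_quotients :: "monomial set \<Rightarrow> bool" where
  "linear_quotients I \<longleftrightarrow>
     (\<exists>fs. distinct fs \<and> set fs = min_gens I \<and>
        (\<forall>i. 0 < i \<and> i < length fs \<longrightarrow>
            generated_by_variables (colon (mon_ideal (set (take i fs))) (fs ! i))))"

definition simplicial_complex :: "nat \<Rightarrow> nat set set \<Rightarrow> bool" where
  "simplicial_complex n \<Gamma> \<longleftrightarrow> \<Gamma> \<subseteq> Pow {1..n} \<and> (\<forall>F\<in>\<Gamma>. \<forall>G. G \<subseteq> F \<longrightarrow> G \<in> \<Gamma>)"

definition minimal_nonface :: "nat \<Rightarrow> nat set set \<Rightarrow> nat set \<Rightarrow> bool" where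
  "minimal_nonface n \<Gamma> F \<longleftrightarrow> F \<subseteq> {1..n} \<and> F \<notin> \<Gamma> \<and> (\<forall>G. G \<subset> F \<longrightarrow> G \<in> \<Gamma>)"

definition flag :: "nat \<Rightarrow> nat set set \<Rightarrow> bool" where
  "flag n \<Sigma> \<longleftrightarrow> simplicial_complex n \<Sigma> \<and>
     (\<forall>F. minimal_nonface n \<Sigma> F \<longrightarrow> card F = 2)"

definition facets :: "nat set set \<Rightarrow> nat set set" where
  "facets \<Gamma> = {F \<in> \<Gamma>. \<forall>G\<in>\<Gamma>. F \<subseteq> G \<longrightarrow> G = F}"

definition SR_ideal :: "nat \<Rightarrow> nat set set \<Rightarrow> monomial set" where
  "SR_ideal n \<Gamma> = mon_ideal {xF F | F. F \<subseteq> {1..n} \<and> F \<notin> \<Gamma>}"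

definition facet_ideal :: "nat set set \<Rightarrow> monomial set" where
  "facet_ideal \<Gamma> = mon_ideal (xF ` facets \<Gamma>)"

definition skel_bar :: "nat \<Rightarrow> nat set set \<Rightarrow> nat \<Rightarrow> nat set set" where
  "skel_bar n \<Sigma> k = {G. \<exists>F. F \<subseteq> {1..n} \<and> card F = k + 1 \<and> F \<notin> \<Sigma> \<and> G \<subseteq> F}"

end

theory Submission
  imports Defs
begin

definition gen :: "nat \<Rightarrow> nat set set \<Rightarrow> nat \<Rightarrow> nat set set" where
  "gen n \<Sigma> k = {F. F \<subseteq> {1..n} \<and> card F = k + 1 \<and> F \<notin> \<Sigma>}"

lemma gen_finite: "F \<in> gen n \<Sigma> k \<Longrightarrow> finite F"
  unfolding gen_def by (metis (mono_tags, lifting) add_gr_0 card_ge_0_finite mem_Collect_eq zero_less_one)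

lemma facets_skel: "facets (skel_bar n \<Sigma> k) = gen n \<Sigma> k"
proof
  show "facets (skel_bar n \<Sigma> k) \<subseteq> gen n \<Sigma> k"
  proof
    fix F assume F: "F \<in> facets (skel_bar n \<Sigma> k)"
    then obtain F' where F': "F' \<subseteq> {1..n}" "card F' = k + 1" "F' \<notin> \<Sigma>" "F \<subseteq> F'"
      unfolding facets_def skel_bar_def by blast
    have "F' \<in> skel_bar n \<Sigma> k" using F' unfolding skel_bar_def by blast
    then have "F' = F" using F F' unfolding facets_def by blast
    then show "F \<in> gen n \<Sigma> k" using F' unfolding gen_def by blast
  qed
next
  show "gen n \<Sigma> k \<subseteq> facets (skel_bar n \<Sigma> k)"
  proof
    fix F assume F: "F \<in> gen n \<Sigma> k"
    have Fs: "F \<in> skel_bar n \<Sigma> k" using F unfolding gen_def skel_bar_def by blast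
    have "G = F" if G1: "G \<in> skel_bar n \<Sigma> k" and G2: "F \<subseteq> G" for G
    proof -
      obtain F' where F': "F' \<subseteq> {1..n}" "card F' = k + 1" "G \<subseteq> F'"
        using G1 unfolding skel_bar_def by blast
      have "finite F'" by (rule card_ge_0_finite) (simp add: F'(2))
      moreover have "F \<subseteq> F'" using G2 F'(3) by blast
      moreover have "card F = card F'" using F F'(2) unfolding gen_def by simp
      ultimately have "F = F'" using card_subset_eq by blast
      then show ?thesis using G2 F' by blast
    qed
    then show "F \<in> facets (skel_bar n \<Sigma> k)" using Fs unfolding facets_def by blast
  qed
qed

lemma take_set_eq: "i < length gs \<Longrightarrow> set (take i gs) = {gs!k | k. k < i}"
proof
  assume i: "i < length gs"
  show "set (take i gs) \<subseteq> {gs!k | k. k < i}"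
  proof
    fix x assume "x \<in> set (take i gs)"
    then obtain k where "k < length (take i gs)" "take i gs ! k = x" by (metis in_set_conv_nth)
    then show "x \<in> {gs!k | k. k < i}" by auto
  qed
  show "{gs!k | k. k < i} \<subseteq> set (take i gs)"
  proof
    fix x assume "x \<in> {gs!k | k. k < i}"
    then obtain k where k: "k < i" "x = gs ! k" by blast
    then have "take i gs ! k = x" "k < length (take i gs)" using i by auto
    then show "x \<in> set (take i gs)" by (metis nth_mem)
  qed
qed

lemma min_gens_antichain:
  assumes "\<forall>g\<in>G. \<forall>h\<in>G. g \<subseteq># h \<longrightarrow> g = h"
  shows "min_gens (mon_ideal G) = G"
proof
  show "min_gens (mon_ideal G) \<subseteq> G"
  proof
    fix m assume m: "m \<in> min_gens (mon_ideal G)"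
    then obtain g where g: "g \<in> G" "g \<subseteq># m" unfolding min_gens_def mon_ideal_def by blast
    have "g \<in> mon_ideal G" using g unfolding mon_ideal_def by blast
    then have "g = m" using m g unfolding min_gens_def by blast
    then show "m \<in> G" using g by simp
  qed
next
  show "G \<subseteq> min_gens (mon_ideal G)"
  proof
    fix g assume g: "g \<in> G"
    have "m' = g" if m1: "m' \<in> mon_ideal G" and m2: "m' \<subseteq># g" for m'
    proof -
      obtain g' where "g' \<in> G" "g' \<subseteq># m'" using m1 unfolding mon_ideal_def by blast
      then have "g' = g" using assms g m2 by (meson subset_mset.order_trans)
      then show ?thesis using \<open>g' \<subseteq># m'\<close> m2 by simp
    qed
    moreover have "g \<in> mon_ideal G" using g unfolding mon_ideal_def by blast
    ultimately show "g \<in> min_gens (mon_ideal G)" unfolding min_gens_def by blast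
  qed
qed

lemma min_gens_gen: "min_gens (facet_ideal (skel_bar n \<Sigma> k)) = xF ` gen n \<Sigma> k"
proof -
  have "\<forall>g\<in>xF ` gen n \<Sigma> k. \<forall>h\<in>xF ` gen n \<Sigma> k. g \<subseteq># h \<longrightarrow> g = h"
  proof (intro ballI impI)
    fix g h assume "g \<in> xF ` gen n \<Sigma> k" "h \<in> xF ` gen n \<Sigma> k" "g \<subseteq># h"
    then obtain F G where FG: "F \<in> gen n \<Sigma> k" "G \<in> gen n \<Sigma> k" "g = xF F" "h = xF G" by blast
    have fin: "finite F" "finite G" using FG gen_finite by auto
    have "F \<subseteq> G" using \<open>g \<subseteq># h\<close> FG fin by (simp add: xF_def)
    moreover have "card F = card G" using FG unfolding gen_def by simp
    ultimately have "F = G" using fin card_subset_eq by blast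
    then show "g = h" using FG by simp
  qed
  then show ?thesis unfolding facet_ideal_def facets_skel by (rule min_gens_antichain)
qed

lemma LQ_criterion:
  assumes "\<forall>i<length gs. \<forall>j<i. \<exists>k<i. \<exists>v. gs!k \<subseteq># gs!i + {#v#} \<and> v \<in># gs!j - gs!i"
  shows "\<forall>i. 0 < i \<and> i < length gs \<longrightarrow>
            generated_by_variables (colon (mon_ideal (set (take i gs))) (gs ! i))"
proof (intro allI impI)
  fix i assume i: "0 < i \<and> i < length gs"
  define V where "V = {v. \<exists>k<i. gs!k \<subseteq># gs!i + {#v#}}"
  have st: "set (take i gs) = {gs!k | k. k < i}"
    using i by (intro take_set_eq) simp
  have "colon (mon_ideal (set (take i gs))) (gs ! i) = mon_ideal (var ` V)"
  proof
    show "colon (mon_ideal (set (take i gs))) (gs ! i) \<subseteq> mon_ideal (var ` V)"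
    proof
      fix m assume "m \<in> colon (mon_ideal (set (take i gs))) (gs ! i)"
      then obtain j where j: "j < i" "gs!j \<subseteq># m + gs!i"
        unfolding colon_def mon_ideal_def st by auto
      obtain k v where kv: "k < i" "gs!k \<subseteq># gs!i + {#v#}" "v \<in># gs!j - gs!i"
        using assms i j by meson
      have "gs!j - gs!i \<subseteq># m" using j(2) by (simp add: subset_eq_diff_conv)
      then have "v \<in># m" using kv(3) by (meson mset_subset_eqD)
      then have "var v \<subseteq># m" by (simp add: var_def)
      moreover have "v \<in> V" using kv unfolding V_def by blast
      ultimately show "m \<in> mon_ideal (var ` V)" unfolding mon_ideal_def by blast
    qed
  next
    show "mon_ideal (var ` V) \<subseteq> colon (mon_ideal (set (take i gs))) (gs ! i)"
    proof
      fix m assume "m \<in> mon_ideal (var ` V)"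
      then obtain v k where vk: "var v \<subseteq># m" "k < i" "gs!k \<subseteq># gs!i + {#v#}"
        unfolding mon_ideal_def V_def by blast
      have "gs!i + {#v#} \<subseteq># m + gs!i" using vk(1) by (simp add: var_def add.commute)
      then have "gs!k \<subseteq># m + gs!i" using vk(3) by (meson subset_mset.order_trans)
      then show "m \<in> colon (mon_ideal (set (take i gs))) (gs ! i)"
        unfolding colon_def mon_ideal_def st using vk(2) by blast
    qed
  qed
  then show "generated_by_variables (colon (mon_ideal (set (take i gs))) (gs ! i))"
    unfolding generated_by_variables_def by blast
qed

lemma flag_nonedge:
  assumes "flag n \<Sigma>" "F \<subseteq> {1..n}" "F \<notin> \<Sigma>"
  shows "\<exists>e\<in>gen n \<Sigma> 1. e \<subseteq> F"
proof -
  obtain G where G: "G \<subseteq> F" "G \<notin> \<Sigma>" and Gmin: "\<forall>H. H \<subseteq> F \<and> H \<notin> \<Sigma> \<longrightarrow> card G \<le> card H"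
    using ex_has_least_nat[of "\<lambda>G. G \<subseteq> F \<and> G \<notin> \<Sigma>" F card] assms by blast
  have finF: "finite F" using assms(2) finite_subset by blast
  then have finG: "finite G" using G finite_subset by blast
  have "H \<in> \<Sigma>" if "H \<subset> G" for H
  proof (rule ccontr)
    assume "H \<notin> \<Sigma>"
    then have "card G \<le> card H" using Gmin that G by blast
    moreover have "card H < card G" using psubset_card_mono[OF finG that] .
    ultimately show False by simp
  qed
  then have "minimal_nonface n \<Sigma> G" unfolding minimal_nonface_def using G assms(2) by blast
  then have "card G = 2" using assms(1) unfolding flag_def by blast
  then have "G \<in> gen n \<Sigma> 1" unfolding gen_def using G assms(2) by auto
  then show ?thesis using G by blast
qed

lemma lq_extract:
  assumes "set fs = xF ` gen n \<Sigma> 1"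
    and lq: "\<forall>i. 0 < i \<and> i < length fs \<longrightarrow>
            generated_by_variables (colon (mon_ideal (set (take i fs))) (fs ! i))"
  shows "set (map set_mset fs) = gen n \<Sigma> 1"
    and "\<forall>p<length fs. xF (map set_mset fs ! p) = fs ! p"
    and "\<forall>p<length fs. \<forall>a<p. \<exists>b<p. \<exists>v. v \<in> map set_mset fs ! a \<and> v \<notin> map set_mset fs ! p
            \<and> map set_mset fs ! b \<subseteq> insert v (map set_mset fs ! p)"
proof -
  show "set (map set_mset fs) = gen n \<Sigma> 1"
    using assms(1) gen_finite by (force simp: xF_def image_image)
  show X: "\<forall>p<length fs. xF (map set_mset fs ! p) = fs ! p"
  proof (intro allI impI)
    fix p assume "p < length fs"
    then have "fs ! p \<in> xF ` gen n \<Sigma> 1" using assms(1) nth_mem by blast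
    then obtain e where "e \<in> gen n \<Sigma> 1" "fs ! p = xF e" by blast
    then show "xF (map set_mset fs ! p) = fs ! p" using \<open>p < length fs\<close> gen_finite by (simp add: xF_def)
  qed
  have fin: "finite (set_mset (fs ! p))" for p by simp
  show "\<forall>p<length fs. \<forall>a<p. \<exists>b<p. \<exists>v. v \<in> map set_mset fs ! a \<and> v \<notin> map set_mset fs ! p
            \<and> map set_mset fs ! b \<subseteq> insert v (map set_mset fs ! p)"
  proof (intro allI impI)
    fix p a assume p: "p < length fs" and a: "a < p"
    have st: "set (take p fs) = {fs!k | k. k < p}"
      using p by (rule take_set_eq)
    obtain V where V: "colon (mon_ideal (set (take p fs))) (fs ! p) = mon_ideal (var ` V)"
      using lq p a unfolding generated_by_variables_def by (metis gr0I not_less0)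
    have "fs ! a - fs ! p \<in> colon (mon_ideal (set (take p fs))) (fs ! p)"
      unfolding colon_def mon_ideal_def st using a by (auto simp: subset_eq_diff_conv[symmetric])
    then have "fs ! a - fs ! p \<in> mon_ideal (var ` V)" using V by simp
    then obtain v where v: "v \<in> V" "var v \<subseteq># fs ! a - fs ! p"
      unfolding mon_ideal_def by blast
    have "v \<in># fs ! a - fs ! p" using v(2) by (simp add: var_def)
    then have cnt: "count (fs ! p) v < count (fs ! a) v" by (simp add: in_diff_count)
    have Xa: "mset_set (set_mset (fs ! a)) = fs ! a" using X p a by (simp add: xF_def)
    have "count (mset_set (set_mset (fs ! a))) v \<le> 1" by (simp add: count_mset_set')
    then have "count (fs ! a) v \<le> 1" unfolding Xa .
    then have "count (fs ! p) v = 0" using cnt by simp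
    then have va: "v \<in> set_mset (fs ! a)" "v \<notin> set_mset (fs ! p)"
      using cnt by (simp_all add: not_in_iff)
    have "var v \<in> mon_ideal (var ` V)" using v(1) unfolding mon_ideal_def by blast
    then have "var v + fs ! p \<in> mon_ideal (set (take p fs))" using V unfolding colon_def by blast
    then obtain b where b: "b < p" "fs ! b \<subseteq># var v + fs ! p" unfolding mon_ideal_def st by blast
    have "set_mset (fs ! b) \<subseteq> insert v (set_mset (fs ! p))"
      using set_mset_mono[OF b(2)] by (simp add: var_def)
    then show "\<exists>b<p. \<exists>v. v \<in> map set_mset fs ! a \<and> v \<notin> map set_mset fs ! p
            \<and> map set_mset fs ! b \<subseteq> insert v (map set_mset fs ! p)"
    proof -
      have "b < length fs" using b p by simp
      then show ?thesis using b va p a \<open>set_mset (fs ! b) \<subseteq> insert v (set_mset (fs ! p))\<close>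
        by (intro exI[of _ b]) auto
    qed
  qed
qed

lemma swap_exists:
  fixes A C :: "nat set"
  assumes "finite A" "finite C" "card A = card C" "A \<noteq> C" "\<Sum>A \<le> \<Sum>C"
  shows "\<exists>v\<in>A-C. \<exists>u\<in>C-A. v < u"
proof (rule ccontr)
  assume H: "\<not> ?thesis"
  have ne1: "A - C \<noteq> {}"
  proof
    assume "A - C = {}"
    then have "A \<subseteq> C" by blast
    then show False using assms card_subset_eq by blast
  qed
  have cd: "card (A - C) = card (C - A)"
    using assms by (simp add: card_Diff_subset_Int Int_commute)
  define m where "m = Min (A - C)"
  have m: "m \<in> A - C" "\<forall>x\<in>A-C. m \<le> x" using ne1 assms(1) unfolding m_def
    by (intro Min_in, auto)
  have "\<forall>u\<in>C-A. u < m" using H m by (metis DiffD1 DiffD2 linorder_neqE_nat)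
  have cpos: "card (C - A) > 0" using ne1 assms(1) cd by (metis card_gt_0_iff finite_Diff)
  have "\<Sum>(C-A) < of_nat (card (C - A)) * m"
    using sum_bounded_above_strict[of "C-A" "\<lambda>x. x" m] cpos \<open>\<forall>u\<in>C-A. u < m\<close> by blast
  also have "\<dots> \<le> \<Sum>(A-C)" using sum_bounded_below[of "A-C" m "\<lambda>x. x"] m cd by simp
  finally have "\<Sum>(C-A) < \<Sum>(A-C)" .
  moreover have "\<Sum>A = \<Sum>(A \<inter> C) + \<Sum>(A - C)" using assms(1) sum.Int_Diff by blast
  moreover have "\<Sum>C = \<Sum>(C \<inter> A) + \<Sum>(C - A)" using assms(2) sum.Int_Diff by blast
  ultimately show False using assms(5) by (simp add: Int_commute)
qed


lemma swap_in_gen: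
  assumes sc: "simplicial_complex n \<Sigma>" and Fi: "Fi \<in> gen n \<Sigma> l"
    and u: "u \<in> Fi" and v: "v \<notin> Fi" "v \<in> {1..n}"
    and e: "e \<in> gen n \<Sigma> 1" "e \<subseteq> insert v (Fi - {u})"
  shows "insert v (Fi - {u}) \<in> gen n \<Sigma> l"
proof -
  have fin: "finite Fi" using Fi gen_finite by blast
  have "card (insert v (Fi - {u})) = card Fi"
    using fin u v by (simp add: card_insert_if) (metis One_nat_def Suc_pred card_gt_0_iff empty_iff)
  moreover have "insert v (Fi - {u}) \<notin> \<Sigma>"
  proof
    assume "insert v (Fi - {u}) \<in> \<Sigma>"
    then have "e \<in> \<Sigma>" using sc e(2) unfolding simplicial_complex_def by blast
    then show False using e(1) unfolding gen_def by blast
  qed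
  ultimately show ?thesis using Fi v unfolding gen_def by auto
qed

theorem corollary1p5:
  fixes n l :: nat and \<Sigma> \<Delta> \<Delta>' :: "nat set set"
  assumes "flag n \<Sigma>"
    and "l \<ge> 1"
    and "simplicial_complex n \<Delta>"
    and "simplicial_complex n \<Delta>'"
    and "SR_ideal n \<Delta> = facet_ideal (skel_bar n \<Sigma> l)"
    and "SR_ideal n \<Delta>' = facet_ideal (skel_bar n \<Sigma> 1)"
    and "linear_quotients (SR_ideal n \<Delta>')"
  shows "linear_quotients (SR_ideal n \<Delta>)"
proof -
  have sc: "simplicial_complex n \<Sigma>" using assms(1) unfolding flag_def by blast
  obtain fs where fs: "distinct fs" "set fs = xF ` gen n \<Sigma> 1"
    "\<forall>i. 0 < i \<and> i < length fs \<longrightarrow>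
            generated_by_variables (colon (mon_ideal (set (take i fs))) (fs ! i))"
    using assms(7) unfolding linear_quotients_def assms(6) min_gens_gen by blast
  define es where "es = map set_mset fs"
  have E1: "set es = gen n \<Sigma> 1" and
    E2: "\<forall>p<length es. \<forall>a<p. \<exists>b<p. \<exists>v. v \<in> es ! a \<and> v \<notin> es ! p \<and> es ! b \<subseteq> insert v (es ! p)"
    using lq_extract[OF fs(2) fs(3)] unfolding es_def by auto
  have esg: "p < length es \<Longrightarrow> es ! p \<in> gen n \<Sigma> 1" for p using E1 nth_mem by blast
  define G where "G = gen n \<Sigma> l"
  define mu where "mu F = (LEAST p. p < length es \<and> es ! p \<subseteq> F)" for F
  define B where "B = Suc (\<Sum>{1..n})"
  define key where "key F = mu F * B + \<Sum>F" for F
  have mu1: "mu F < length es \<and> es ! (mu F) \<subseteq> F" if "F \<in> G" for F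
  proof -
    have "F \<subseteq> {1..n}" "F \<notin> \<Sigma>" using that unfolding G_def gen_def by auto
    then obtain e where "e \<in> gen n \<Sigma> 1" "e \<subseteq> F" using flag_nonedge assms(1) by blast
    then obtain p where "p < length es" "es ! p \<subseteq> F" using E1 by (metis in_set_conv_nth)
    then have "p < length es \<and> es ! p \<subseteq> F" by blast
    then show ?thesis unfolding mu_def by (rule LeastI[of "\<lambda>p. p < length es \<and> es ! p \<subseteq> F" p])
  qed
  have mu2: "mu F \<le> p" if "p < length es" "es ! p \<subseteq> F" for F p
    unfolding mu_def using that by (simp add: Least_le)
  have sB: "\<Sum>F < B" if "F \<in> G" for F
  proof -
    have "F \<subseteq> {1..n}" using that unfolding G_def gen_def by auto
    then have "\<Sum>F \<le> \<Sum>{1..n}" by (intro sum_mono2) auto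
    then show ?thesis unfolding B_def by simp
  qed
  have keyless: "a * B + x < c * B + y" if "a < c" "x < B" for a c x y :: nat
  proof -
    have "a * B + x < a * B + B" using that by simp
    also have "\<dots> = Suc a * B" by simp
    also have "\<dots> \<le> c * B" using that by (intro mult_le_mono1) simp
    finally show ?thesis by simp
  qed
  have keyle: "a < c \<or> (a = c \<and> x \<le> y)" if "a * B + x \<le> c * B + y" "x < B" "y < B" for a c x y :: nat
  proof (cases "c < a")
    case True
    then have "c * B + y < a * B + x" using keyless that by blast
    then show ?thesis using that by simp
  next
    case False
    then show ?thesis using that by auto
  qed
  have step: "\<exists>Fk\<in>G. \<exists>v. key Fk < key Fi \<and> Fk \<subseteq> insert v Fi \<and> v \<in> Fj \<and> v \<notin> Fi"
    if Fj: "Fj \<in> G" and Fi: "Fi \<in> G" and ne: "Fj \<noteq> Fi" and kle: "key Fj \<le> key Fi" for Fj Fi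
  proof -
    have finFi: "finite Fi" and finFj: "finite Fj" using Fi Fj gen_finite unfolding G_def by auto
    have cFi: "card Fi = l + 1" "card Fj = l + 1" using Fi Fj unfolding G_def gen_def by auto
    from keyle[OF kle[unfolded key_def] sB[OF Fj] sB[OF Fi]]
    have "mu Fj < mu Fi \<or> (mu Fj = mu Fi \<and> \<Sum>Fj \<le> \<Sum>Fi)" .
    then show ?thesis
    proof
      assume lt: "mu Fj < mu Fi"
      define p where "p = mu Fi"
      define a where "a = mu Fj"
      have p: "p < length es" "es ! p \<subseteq> Fi" using mu1[OF Fi] unfolding p_def by auto
      have a: "a < p" "es ! a \<subseteq> Fj" using mu1[OF Fj] lt unfolding p_def a_def by auto
      obtain b v where b: "b < p" "v \<in> es ! a" "v \<notin> es ! p" "es ! b \<subseteq> insert v (es ! p)"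
        using E2 p a by blast
      have bl: "b < length es" using b p by simp
      have vFi: "v \<notin> Fi"
      proof
        assume "v \<in> Fi"
        then have "es ! b \<subseteq> Fi" using b p by blast
        then have "mu Fi \<le> b" using mu2 bl by blast
        then show False using b unfolding p_def by simp
      qed
      obtain u where u: "u \<in> Fi" "u \<notin> es ! b"
      proof (rule ccontr)
        assume "\<not> thesis"
        then have sub: "Fi \<subseteq> es ! b" using that by blast
        have eb: "es ! b \<in> gen n \<Sigma> 1" using esg[OF bl] .
        have c2: "card (es ! b) = 2" using eb unfolding gen_def by simp
        have fb: "finite (es ! b)" using gen_finite[OF eb] .
        have "card (es ! b) \<le> card Fi" using cFi assms(2) c2 by simp
        then have "Fi = es ! b" using card_seteq[OF fb sub] by blast
        then have "mu Fi \<le> b" using mu2 bl by blast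
        then show False using b unfolding p_def by simp
      qed
      define Fk where "Fk = insert v (Fi - {u})"
      have vn: "v \<in> {1..n}" using esg[of a] a p b(2) unfolding gen_def by auto
      have ebk: "es ! b \<subseteq> Fk" using b(4) p(2) u(2) unfolding Fk_def by blast
      have FkG: "Fk \<in> G" unfolding Fk_def G_def
        using swap_in_gen[OF sc Fi[unfolded G_def] u(1) vFi vn esg[OF bl]] ebk Fk_def by blast
      have "mu Fk \<le> b" using mu2[OF bl ebk] .
      then have "mu Fk < mu Fi" using b unfolding p_def by simp
      then have "key Fk < key Fi" unfolding key_def using keyless sB[OF FkG] by blast
      moreover have "Fk \<subseteq> insert v Fi" unfolding Fk_def by blast
      moreover have "v \<in> Fj" using a b by blast
      ultimately show ?thesis using FkG vFi by blast
    next
      assume eq: "mu Fj = mu Fi \<and> \<Sum>Fj \<le> \<Sum>Fi"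
      define p where "p = mu Fi"
      have p: "p < length es" "es ! p \<subseteq> Fi" "es ! p \<subseteq> Fj" using mu1[OF Fi] mu1[OF Fj] eq unfolding p_def by auto
      obtain v u where vu: "v \<in> Fj - Fi" "u \<in> Fi - Fj" "v < u"
        using swap_exists[OF finFj finFi] cFi ne eq by auto
      define Fk where "Fk = insert v (Fi - {u})"
      have vn: "v \<in> {1..n}" using Fj vu unfolding G_def gen_def by auto
      have epk: "es ! p \<subseteq> Fk" using p vu unfolding Fk_def by blast
      have FkG: "Fk \<in> G" unfolding Fk_def G_def
        using swap_in_gen[OF sc Fi[unfolded G_def], of u v "es ! p"] vu vn esg[OF p(1)] epk Fk_def by blast
      have "mu Fk \<le> mu Fi" using mu2[OF p(1) epk] unfolding p_def .
      moreover have "\<Sum>Fk < \<Sum>Fi"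
      proof -
        have "\<Sum>Fk = v + \<Sum>(Fi - {u})" unfolding Fk_def using finFi vu by simp
        moreover have "\<Sum>Fi = u + \<Sum>(Fi - {u})"
          using sum.remove[OF finFi, of u "\<lambda>x. x"] vu by blast
        ultimately show ?thesis using vu by simp
      qed
      ultimately have "key Fk < key Fi" unfolding key_def
        using mult_le_mono1[of "mu Fk" "mu Fi" B] by linarith
      moreover have "Fk \<subseteq> insert v Fi" unfolding Fk_def by blast
      ultimately show ?thesis using FkG vu by blast
    qed
  qed
  have finG: "finite G" unfolding G_def gen_def
    by (rule finite_subset[of _ "Pow {1..n}"]) auto
  obtain Ls where Ls: "set Ls = G" "distinct Ls" using finite_distinct_list[OF finG] by blast
  define L where "L = sort_key key Ls"
  have L: "distinct L" "set L = G" "sorted (map key L)" using Ls unfolding L_def by auto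
  define gs where "gs = map xF L"
  have injx: "inj_on xF G" unfolding inj_on_def xF_def G_def using gen_finite by auto
  have gs1: "distinct gs" unfolding gs_def using L injx by (simp add: distinct_map)
  have gs2: "set gs = min_gens (SR_ideal n \<Delta>)"
    unfolding assms(5) min_gens_gen gs_def using L G_def by simp
  have cond: "\<forall>i<length gs. \<forall>j<i. \<exists>k<i. \<exists>v. gs!k \<subseteq># gs!i + {#v#} \<and> v \<in># gs!j - gs!i"
  proof (intro allI impI)
    fix i j assume i: "i < length gs" and j: "j < i"
    have il: "i < length L" and jl: "j < length L" using i j unfolding gs_def by auto
    have FiG: "L ! i \<in> G" and FjG: "L ! j \<in> G" using il jl L(2) nth_mem by blast+
    have ne: "L ! j \<noteq> L ! i" using L(1) il jl j nth_eq_iff_index_eq by fastforce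
    have "key (L ! j) \<le> key (L ! i)"
      using sorted_nth_mono[OF L(3), of j i] j il by simp
    then obtain Fk v where Fk: "Fk \<in> G" "key Fk < key (L ! i)" "Fk \<subseteq> insert v (L ! i)"
      "v \<in> L ! j" "v \<notin> L ! i"
      using step[OF FjG FiG ne] by blast
    obtain k where k: "k < length L" "L ! k = Fk" using Fk(1) L(2) by (metis in_set_conv_nth)
    have ki: "k < i"
    proof (rule ccontr)
      assume "\<not> k < i"
      then have "key (L ! i) \<le> key (L ! k)"
        using sorted_nth_mono[OF L(3), of i k] k by simp
      then show False using Fk k by simp
    qed
    have finI: "finite (L ! i)" and finJ: "finite (L ! j)" and finK: "finite Fk"
      using FiG FjG Fk(1) gen_finite unfolding G_def by auto
    have "xF Fk \<subseteq># xF (insert v (L ! i))" using Fk(3) finI finK by (simp add: xF_def)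
    also have "xF (insert v (L ! i)) = xF (L ! i) + {#v#}"
      using finI Fk(5) by (simp add: xF_def)
    finally have "gs ! k \<subseteq># gs ! i + {#v#}" unfolding gs_def using k il by simp
    moreover have "v \<in># gs ! j - gs ! i"
      unfolding gs_def using jl il Fk(4,5) finI finJ by (simp add: xF_def in_diff_count)
    ultimately show "\<exists>k<i. \<exists>v. gs!k \<subseteq># gs!i + {#v#} \<and> v \<in># gs!j - gs!i" using ki by blast
  qed
  show ?thesis unfolding linear_quotients_def
    using gs1 gs2 LQ_criterion[OF cond] by blast
qed

end
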